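(* Let $n\ge3$, $1<k<n/2$, $p>\frac{nk}{n-2k}$, and let $u$ be a regular solution of (1.6). If $u(r)=O(r^{-\frac{2k}{p-k}-\varepsilon})$ as $r\to\infty$ for some $\varepsilon\in\big(0,\frac{n-2k}{k}-\frac{2k}{p-k}\big)$, then $u(r)=O(r^{\frac{2k-n}{k}})$ as $r\to\infty$.
   Context: Problem (1.6) is: given $\rho>0$, find $u$ with $-\tfrac{1}{k}C_{n-1}^{k-1}(r^{n-k}|u'|^{k-1}u')'=r^{n-1}u^{p}$, $u(r)>0$ for all $r>0$, $u'(0)=0$, $u(0)=\rho$, where $C_{n-1}^{k-1}$ is the binomial coefficient. A solution $u$ of (1.6) is regular if $x\mapsto u(|x|)$ belongs to $C^2(\mathbb{R}^n)$. *)

theory Defs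
  imports "HOL-Analysis.Analysis" "HOL-Library.Landau_Symbols"
begin

definition C2 :: "('a::euclidean_space \<Rightarrow> real) \<Rightarrow> bool" where
  "C2 f \<longleftrightarrow> (\<exists>(f' :: 'a \<Rightarrow> ('a \<Rightarrow>\<^sub>L real)) (f'' :: 'a \<Rightarrow> ('a \<Rightarrow>\<^sub>L ('a \<Rightarrow>\<^sub>L real))).
      (\<forall>x. (f has_derivative blinfun_apply (f' x)) (at x)) \<and>
      (\<forall>x. (f' has_derivative blinfun_apply (f'' x)) (at x)) \<and>
      continuous_on UNIV f'')"

definition solves_1_6 :: "nat \<Rightarrow> nat \<Rightarrow> real \<Rightarrow> real \<Rightarrow> (real \<Rightarrow> real) \<Rightarrow> bool" where
  "solves_1_6 n k p \<rho> u \<longleftrightarrow>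
     (\<forall>r>0. u r > 0) \<and> u 0 = \<rho> \<and>
     (u has_real_derivative 0) (at 0 within {0..}) \<and>
     (\<forall>r>0. u differentiable (at r) \<and>
        ((\<lambda>s. s ^ (n - k) * \<bar>deriv u s\<bar> ^ (k - 1) * deriv u s) has_real_derivative
           (- real k / real ((n - 1) choose (k - 1)) * r ^ (n - 1) * u r powr p)) (at r))"

definition regular_sol :: "'n::finite itself \<Rightarrow> nat \<Rightarrow> real \<Rightarrow> real \<Rightarrow> (real \<Rightarrow> real) \<Rightarrow> bool" where
  "regular_sol _ k p \<rho> u \<longleftrightarrow> solves_1_6 CARD('n) k p \<rho> u \<and> C2 (\<lambda>x::real^'n. u (norm x))"

end

theory Submission imports Defs begin

lemma abs_bound_deriv:
  fixes f G f' g :: "real \<Rightarrow> real"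
  assumes df: "\<And>r. r \<ge> R \<Longrightarrow> (f has_real_derivative f' r) (at r)"
    and dG: "\<And>r. r \<ge> R \<Longrightarrow> (G has_real_derivative g r) (at r)"
    and le: "\<And>r. r \<ge> R \<Longrightarrow> \<bar>f' r\<bar> \<le> g r" and r: "R \<le> r"
  shows "\<bar>f r\<bar> \<le> \<bar>f R\<bar> + (G r - G R)"
proof -
  have 1: "(\<lambda>x. G x - f x) R \<le> (\<lambda>x. G x - f x) r"
  proof (rule deriv_nonneg_imp_mono[where g = "\<lambda>x. G x - f x" and a = R and b = r and g' = "\<lambda>x. g x - f' x"])
    fix x assume "x \<in> {R..r}"
    hence x: "R \<le> x" by simp
    show "((\<lambda>x. G x - f x) has_real_derivative g x - f' x) (at x)"
      by (rule DERIV_diff[OF dG[OF x] df[OF x]])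
    show "0 \<le> g x - f' x" using le[OF x] by linarith
  qed (rule r)
  have 2: "(\<lambda>x. G x + f x) R \<le> (\<lambda>x. G x + f x) r"
  proof (rule deriv_nonneg_imp_mono[where g = "\<lambda>x. G x + f x" and a = R and b = r and g' = "\<lambda>x. g x + f' x"])
    fix x assume "x \<in> {R..r}"
    hence x: "R \<le> x" by simp
    show "((\<lambda>x. G x + f x) has_real_derivative g x + f' x) (at x)"
      by (rule DERIV_add[OF dG[OF x] df[OF x]])
    show "0 \<le> g x + f' x" using le[OF x] by linarith
  qed (rule r)
  show ?thesis using 1 2 by auto
qed

lemma u_bound_deriv:
  fixes u u' :: "real \<Rightarrow> real"
  assumes du: "\<And>r. r \<ge> R \<Longrightarrow> (u has_real_derivative u' r) (at r)"
    and le: "\<And>r. r \<ge> R \<Longrightarrow> \<bar>u' r\<bar> \<le> B * r powr (t - 1)"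
    and t: "t < 0" and R: "R > 0" and lim: "(u \<longlongrightarrow> 0) at_top" and r: "r \<ge> R"
  shows "u r \<le> B / (- t) * r powr t"
proof -
  define g where "g x = u x - B / (- t) * x powr t" for x
  have mono: "g r \<le> g x" if "x \<ge> r" for x
  proof (rule deriv_nonneg_imp_mono[where g = g and a = r and b = x and g' = "\<lambda>x. u' x + B * x powr (t - 1)"])
    fix y assume y: "y \<in> {r..x}"
    hence y0: "y > 0" "y \<ge> R" using r R by auto
    have "(g has_real_derivative u' y - B / (- t) * (t * y powr (t - 1))) (at y)"
      unfolding g_def
      by (rule DERIV_diff[OF du[OF y0(2)] DERIV_cmult[OF has_real_derivative_powr[OF y0(1)]]])
    moreover have "u' y - B / (- t) * (t * y powr (t - 1)) = u' y + B * y powr (t - 1)"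
      using t by (simp add: field_simps)
    ultimately show "(g has_real_derivative u' y + B * y powr (t - 1)) (at y)" by simp
    show "0 \<le> u' y + B * y powr (t - 1)" using le[OF y0(2)] by linarith
  qed (use that in auto)
  have glim: "(g \<longlongrightarrow> 0) at_top"
  proof -
    have "((\<lambda>x. x powr t) \<longlongrightarrow> 0) at_top"
      using t by (intro tendsto_neg_powr filterlim_ident) auto
    hence "((\<lambda>x. u x - B / (- t) * x powr t) \<longlongrightarrow> 0 - B / (- t) * 0) at_top"
      by (intro tendsto_intros lim)
    thus ?thesis unfolding g_def by simp
  qed
  have "g r \<le> 0"
    by (rule tendsto_le[OF trivial_limit_at_top_linorder glim tendsto_const])
       (auto simp: eventually_at_top_linorder intro!: exI[of _ r] mono)
  thus ?thesis unfolding g_def by simp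
qed


locale sol =
  fixes n k :: nat and p c :: real and u w :: "real \<Rightarrow> real"
  assumes k: "1 \<le> k" "k < n" and p: "p > 0" and c: "c \<ge> 0"
    and upos: "\<And>r. r > 0 \<Longrightarrow> u r > 0"
    and du: "\<And>r. r > 0 \<Longrightarrow> (u has_real_derivative deriv u r) (at r)"
    and w_def: "\<And>s. w s = s ^ (n - k) * \<bar>deriv u s\<bar> ^ (k - 1) * deriv u s"
    and dw: "\<And>r. r > 0 \<Longrightarrow> (w has_real_derivative (- c * r ^ (n - 1) * u r powr p)) (at r)"
begin

definition P where "P b \<longleftrightarrow> (\<exists>M R. R \<ge> 1 \<and> M > 0 \<and> (\<forall>r\<ge>R. u r \<le> M * r powr (-b)))"

lemma wprime_bound:
  assumes "P b"
  shows "\<exists>K R. R \<ge> 1 \<and> K \<ge> 0 \<and> (\<forall>r\<ge>R. \<bar>- c * r ^ (n - 1) * u r powr p\<bar> \<le> K * r powr (real n - p * b - 1))"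
proof -
  obtain M R where MR: "R \<ge> 1" "M > 0" "\<And>r. r \<ge> R \<Longrightarrow> u r \<le> M * r powr (-b)"
    using assms unfolding P_def by blast
  have "\<bar>- c * r ^ (n - 1) * u r powr p\<bar> \<le> (c * M powr p) * r powr (real n - p * b - 1)" if r: "r \<ge> R" for r
  proof -
    have r0: "r > 0" using r MR by auto
    have eq: "r ^ (n - 1) = r powr (real n - 1)"
      using r0 k by (simp add: powr_realpow[symmetric] of_nat_diff)
    have "\<bar>- c * r ^ (n - 1) * u r powr p\<bar> = c * r powr (real n - 1) * u r powr p"
      using c r0 eq by (simp add: abs_mult)
    also have "\<dots> \<le> c * r powr (real n - 1) * (M * r powr (-b)) powr p"
      using c r0 p upos[OF r0] MR(3)[OF r]
      by (intro mult_left_mono powr_mono2) auto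
    also have "(M * r powr (-b)) powr p = M powr p * r powr (- b * p)"
      using MR(2) r0 by (simp add: powr_mult powr_powr)
    also have "c * r powr (real n - 1) * (M powr p * r powr (- b * p))
        = (c * M powr p) * (r powr (real n - 1) * r powr (- b * p))" by simp
    also have "r powr (real n - 1) * r powr (- b * p) = r powr (real n - p * b - 1)"
      by (simp add: powr_add[symmetric] algebra_simps)
    finally show ?thesis .
  qed
  thus ?thesis using MR c by (intro exI[of _ "c * M powr p"] exI[of _ R]) auto
qed

lemma w_bound_pos:
  assumes "P b" "s > 0" "s \<ge> real n - p * b"
  shows "\<exists>A R. R \<ge> 1 \<and> (\<forall>r\<ge>R. \<bar>w r\<bar> \<le> A * r powr s)"
proof -
  obtain K R where KR: "R \<ge> 1" "K \<ge> 0"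
    "\<And>r. r \<ge> R \<Longrightarrow> \<bar>- c * r ^ (n - 1) * u r powr p\<bar> \<le> K * r powr (real n - p * b - 1)"
    using wprime_bound[OF assms(1)] by blast
  have "\<bar>w r\<bar> \<le> (\<bar>w R\<bar> + K / s) * r powr s" if r: "r \<ge> R" for r
  proof -
    have "\<bar>w r\<bar> \<le> \<bar>w R\<bar> + ((\<lambda>x. K / s * x powr s) r - (\<lambda>x. K / s * x powr s) R)"
    proof (rule abs_bound_deriv[where f' = "\<lambda>r. - c * r ^ (n - 1) * u r powr p"
          and g = "\<lambda>x. K / s * (s * x powr (s - 1))"])
      fix x assume x: "R \<le> x"
      hence x0: "x > 0" using KR by auto
      show "(w has_real_derivative - c * x ^ (n - 1) * u x powr p) (at x)" using dw[OF x0] .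
      show "((\<lambda>x. K / s * x powr s) has_real_derivative K / s * (s * x powr (s - 1))) (at x)"
        by (rule DERIV_cmult[OF has_real_derivative_powr[OF x0]])
      have "K * x powr (real n - p * b - 1) \<le> K * x powr (s - 1)"
        using KR x assms by (intro mult_left_mono powr_mono) auto
      thus "\<bar>- c * x ^ (n - 1) * u x powr p\<bar> \<le> K / s * (s * x powr (s - 1))"
        using KR(3)[OF x] assms(2) by simp
    qed (use r in auto)
    also have "\<dots> \<le> \<bar>w R\<bar> + K / s * r powr s"
      using KR assms(2) by simp
    also have "\<dots> \<le> \<bar>w R\<bar> * r powr s + K / s * r powr s"
    proof -
      have "1 \<le> r powr s" using r KR assms by (intro ge_one_powr_ge_zero) auto
      hence "\<bar>w R\<bar> * 1 \<le> \<bar>w R\<bar> * r powr s" by (intro mult_left_mono) auto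
      thus ?thesis by simp
    qed
    finally show ?thesis by (simp add: algebra_simps)
  qed
  hence "R \<ge> 1 \<and> (\<forall>r\<ge>R. \<bar>w r\<bar> \<le> (\<bar>w R\<bar> + K / s) * r powr s)" using KR by simp
  thus ?thesis by (rule exI[of _ "\<bar>w R\<bar> + K / s", OF exI[of _ R]])
qed

lemma w_bound_neg:
  assumes "P b" "real n - p * b < 0"
  shows "\<exists>A R. R \<ge> 1 \<and> (\<forall>r\<ge>R. \<bar>w r\<bar> \<le> A)"
proof -
  define e where "e = real n - p * b"
  have e: "e < 0" using assms e_def by simp
  obtain K R where KR: "R \<ge> 1" "K \<ge> 0"
    "\<And>r. r \<ge> R \<Longrightarrow> \<bar>- c * r ^ (n - 1) * u r powr p\<bar> \<le> K * r powr (e - 1)"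
    using wprime_bound[OF assms(1)] unfolding e_def by blast
  have "\<bar>w r\<bar> \<le> \<bar>w R\<bar> + K / (- e) * R powr e" if r: "r \<ge> R" for r
  proof -
    have "\<bar>w r\<bar> \<le> \<bar>w R\<bar> + ((\<lambda>x. K / e * x powr e) r - (\<lambda>x. K / e * x powr e) R)"
    proof (rule abs_bound_deriv[where f' = "\<lambda>r. - c * r ^ (n - 1) * u r powr p"
          and g = "\<lambda>x. K / e * (e * x powr (e - 1))"])
      fix x assume x: "R \<le> x"
      hence x0: "x > 0" using KR by auto
      show "(w has_real_derivative - c * x ^ (n - 1) * u x powr p) (at x)" using dw[OF x0] .
      show "((\<lambda>x. K / e * x powr e) has_real_derivative K / e * (e * x powr (e - 1))) (at x)"
        by (rule DERIV_cmult[OF has_real_derivative_powr[OF x0]])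
      show "\<bar>- c * x ^ (n - 1) * u x powr p\<bar> \<le> K / e * (e * x powr (e - 1))"
        using KR(3)[OF x] e by simp
    qed (use r in auto)
    also have "\<dots> \<le> \<bar>w R\<bar> + K / (- e) * R powr e"
    proof -
      have "K / e * r powr e \<le> 0" using KR e by (simp add: divide_nonneg_neg mult_nonpos_nonneg)
      moreover have "K / e * R powr e = - (K / (- e) * R powr e)" by simp
      ultimately show ?thesis by linarith
    qed
    finally show ?thesis .
  qed
  hence "R \<ge> 1 \<and> (\<forall>r\<ge>R. \<bar>w r\<bar> \<le> \<bar>w R\<bar> + K / (- e) * R powr e)" using KR by simp
  thus ?thesis by (rule exI[of _ "\<bar>w R\<bar> + K / (- e) * R powr e", OF exI[of _ R]])
qed

lemma u_tendsto:
  assumes "P b" "b > 0"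
  shows "(u \<longlongrightarrow> 0) at_top"
proof -
  obtain M R where MR: "R \<ge> 1" "M > 0" "\<And>r. r \<ge> R \<Longrightarrow> u r \<le> M * r powr (-b)"
    using assms unfolding P_def by blast
  have "((\<lambda>r. r powr (-b)) \<longlongrightarrow> 0) at_top"
    using assms(2) by (intro tendsto_neg_powr filterlim_ident) simp
  hence lim: "((\<lambda>r. M * r powr (-b)) \<longlongrightarrow> 0) at_top"
    using tendsto_mult_right_zero by blast
  have e1: "eventually (\<lambda>r. 0 \<le> u r) at_top"
    unfolding eventually_at_top_linorder
    by (rule exI[of _ 1]) (simp add: less_imp_le upos)
  have e2: "eventually (\<lambda>r. u r \<le> M * r powr (-b)) at_top"
    unfolding eventually_at_top_linorder by (rule exI[of _ R]) (simp add: MR(3))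
  show ?thesis by (rule tendsto_sandwich[OF e1 e2 tendsto_const lim])
qed

lemma root_bound:
  fixes x X :: real
  assumes "x \<ge> 0" "x ^ k \<le> X"
  shows "x \<le> X powr (1 / real k)"
proof (cases "x = 0")
  case True thus ?thesis by simp
next
  case False
  hence x: "x > 0" using assms by simp
  have "x = (x ^ k) powr (1 / real k)"
    using x k by (simp add: powr_realpow[symmetric] powr_powr)
  also have "\<dots> \<le> X powr (1 / real k)"
    using assms x by (intro powr_mono2) auto
  finally show ?thesis .
qed

lemma u_from_w:
  assumes wb: "\<And>r. r \<ge> R \<Longrightarrow> \<bar>w r\<bar> \<le> A * r powr s" and R: "R \<ge> 1"
    and s: "0 \<le> s" "s < real n - 2 * real k" and Pb: "P b0" "b0 > 0"
  shows "P ((real n - 2 * real k - s) / real k)"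
proof -
  have A: "A \<ge> 0"
  proof -
    have "0 \<le> A * R powr s" using wb[of R] by linarith
    moreover have "R powr s > 0" using R by simp
    ultimately show ?thesis by (simp add: zero_le_mult_iff)
  qed
  define t where "t = (s + 2 * real k - real n) / real k"
  have kpos: "real k > 0" using k by simp
  have t: "t < 0" using s kpos unfolding t_def by (simp add: divide_neg_pos)
  define B where "B = A powr (1 / real k)"
  have Dle: "\<bar>deriv u r\<bar> \<le> B * r powr (t - 1)" if r: "r \<ge> R" for r
  proof -
    have r0: "r > 0" using r R by simp
    obtain m where km: "k = Suc m" using k by (cases k) auto
    have "\<bar>w r\<bar> = r ^ (n - k) * \<bar>deriv u r\<bar> ^ k"
      using r0 by (simp add: w_def abs_mult power_abs km)
    also have "r ^ (n - k) = r powr (real n - real k)"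
      using r0 k by (simp add: powr_realpow[symmetric] of_nat_diff)
    finally have "r powr (real n - real k) * \<bar>deriv u r\<bar> ^ k \<le> A * r powr s"
      using wb[OF r] by simp
    hence "\<bar>deriv u r\<bar> ^ k \<le> A * r powr s / r powr (real n - real k)"
      using r0 by (simp add: field_simps)
    also have "\<dots> = A * r powr (s - (real n - real k))"
      using r0 by (simp add: powr_diff)
    finally have "\<bar>deriv u r\<bar> \<le> (A * r powr (s - (real n - real k))) powr (1 / real k)"
      by (intro root_bound) auto
    also have "\<dots> = B * r powr ((s - (real n - real k)) / real k)"
      using A r0 by (simp add: B_def powr_mult powr_powr)
    also have "(s - (real n - real k)) / real k = t - 1"
      using kpos unfolding t_def by (simp add: field_simps)
    finally show ?thesis .
  qed
  have ub: "u r \<le> B / (- t) * r powr t" if "r \<ge> R" for r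
    by (rule u_bound_deriv[OF du Dle t _ u_tendsto[OF Pb] that]) (use R in auto)
  have fin: "u r \<le> max 1 (B / (- t)) * r powr (- ((real n - 2 * real k - s) / real k))" if "r \<ge> R" for r
  proof -
    have "- ((real n - 2 * real k - s) / real k) = t" unfolding t_def
      by (simp only: diff_divide_distrib add_divide_distrib)
    moreover have "B / (- t) * r powr t \<le> max 1 (B / (- t)) * r powr t"
      by (intro mult_right_mono) auto
    ultimately show ?thesis using ub[OF that] by simp
  qed
  have "R \<ge> 1 \<and> max 1 (B / (- t)) > 0 \<and> (\<forall>r\<ge>R. u r \<le> max 1 (B / (- t)) * r powr (- ((real n - 2 * real k - s) / real k)))"
    using R fin by simp
  thus ?thesis unfolding P_def by (rule exI[of _ "max 1 (B / (- t))", OF exI[of _ R]])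
qed

end

lemma (in sol) final_step:
  assumes "P b" "b > 0" "p * b > real n" "2 * real k < real n"
  shows "P ((real n - 2 * real k) / real k)"
proof -
  obtain A R where AR: "R \<ge> 1" "\<And>r. r \<ge> R \<Longrightarrow> \<bar>w r\<bar> \<le> A"
    using w_bound_neg[OF assms(1)] assms(3) by auto
  have wb: "\<bar>w r\<bar> \<le> A * r powr 0" if "r \<ge> R" for r
    using AR that by simp
  have "P ((real n - 2 * real k - 0) / real k)"
    by (rule u_from_w[OF wb AR(1) _ _ assms(1,2)]) (use assms(4) in auto)
  thus ?thesis by simp
qed

lemma (in sol) iter_step:
  assumes "P b" "p * b \<le> real n" "a > 0" "(p - real k) * a = 2 * real k" "d > 0"
    "b = a + d" "real k * l < p" "l > 0" "2 * real k < real n"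
  shows "P (a + l * d)"
proof -
  have kpos: "real k > 0" using k by simp
  define s where "s = real n - 2 * real k - real k * (a + l * d)"
  have kld: "real k * l * d < p * d" using assms(5,7) by (intro mult_strict_right_mono) auto
  have pa: "p * a - real k * a = 2 * real k" using assms(4) by (simp add: algebra_simps)
  have pb: "p * a + p * d \<le> real n" using assms(2,6) by (simp add: algebra_simps)
  have s1: "s \<ge> real n - p * b" unfolding s_def assms(6)
    using kld pa by (simp add: algebra_simps)
  have s2: "s > 0" unfolding s_def using kld pa pb by (simp add: algebra_simps)
  have pos: "real k * (a + l * d) > 0" using kpos assms(3,5,8) by (intro mult_pos_pos add_pos_pos) auto
  have s3: "s < real n - 2 * real k" unfolding s_def using pos by simp
  obtain A R where AR: "R \<ge> 1" "\<And>r. r \<ge> R \<Longrightarrow> \<bar>w r\<bar> \<le> A * r powr s"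
    using w_bound_pos[OF assms(1) s2 s1] by auto
  have "P ((real n - 2 * real k - s) / real k)"
    by (rule u_from_w[OF AR(2) AR(1) _ s3 assms(1)]) (use s2 assms(3,5,6) in auto)
  moreover have "(real n - 2 * real k - s) / real k = a + l * d"
    unfolding s_def using kpos by (simp add: field_simps)
  ultimately show ?thesis by simp
qed


theorem lemma2p2:
  fixes n k :: nat and p \<rho> \<epsilon> :: real and u :: "real \<Rightarrow> real"
  assumes "CARD('n::finite) = n" and "n \<ge> 3"
    and "1 < k" and "2 * k < n"
    and "p > real n * real k / (real n - 2 * real k)"
    and "\<rho> > 0"
    and "regular_sol TYPE('n) k p \<rho> u"
    and "0 < \<epsilon>" and "\<epsilon> < (real n - 2 * real k) / real k - 2 * real k / (p - real k)"
    and "u \<in> O[at_top](\<lambda>r. r powr (- (2 * real k / (p - real k)) - \<epsilon>))"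
  shows "u \<in> O[at_top](\<lambda>r. r powr ((2 * real k - real n) / real k))"
proof -
  have sol: "solves_1_6 n k p \<rho> u"
    using assms(7) assms(1) unfolding regular_sol_def by simp
  define cc where "cc = real ((n - 1) choose (k - 1))"
  define w where "w s = s ^ (n - k) * \<bar>deriv u s\<bar> ^ (k - 1) * deriv u s" for s
  have kpos: "real k > 0" using assms(3) by simp
  have nk: "real n - 2 * real k > 0" using assms(4) by simp
  have pk: "p > real k"
  proof -
    have "real k * (real n - 2 * real k) < real n * real k"
      using kpos by (simp add: algebra_simps)
    hence "real k < real n * real k / (real n - 2 * real k)"
      using nk by (simp add: pos_less_divide_eq)
    thus ?thesis using assms(5) by linarith
  qed
  have ccpos: "cc > 0" unfolding cc_def using assms(3,4) by simp
  interpret S: sol n k p "real k / cc" u w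
  proof
    show "1 \<le> k" "k < n" using assms(3,4) by auto
    show "p > 0" using pk kpos by linarith
    show "real k / cc \<ge> 0" using ccpos by simp
    show "\<And>r. r > 0 \<Longrightarrow> u r > 0" using sol unfolding solves_1_6_def by blast
    show "\<And>r. r > 0 \<Longrightarrow> (u has_real_derivative deriv u r) (at r)"
      using sol unfolding solves_1_6_def by (simp add: DERIV_deriv_iff_real_differentiable)
    show "\<And>s. w s = s ^ (n - k) * \<bar>deriv u s\<bar> ^ (k - 1) * deriv u s" by (simp add: w_def)
    fix r :: real assume r: "r > 0"
    have "(w has_real_derivative (- real k / cc * r ^ (n - 1) * u r powr p)) (at r)"
      using sol r unfolding solves_1_6_def w_def[abs_def] cc_def by blast
    thus "(w has_real_derivative (- (real k / cc) * r ^ (n - 1) * u r powr p)) (at r)"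
      by simp
  qed
  define a where "a = 2 * real k / (p - real k)"
  have apos: "a > 0" unfolding a_def using pk kpos by simp
  have aeq: "(p - real k) * a = 2 * real k" unfolding a_def using pk by simp
  define l where "l = (1 + p / real k) / 2"
  have l1: "l > 1" unfolding l_def using pk kpos by (simp add: field_simps)
  have kl: "real k * l < p" unfolding l_def using pk kpos by (simp add: field_simps)
  define b where "b j = a + \<epsilon> * l ^ j" for j
  have bpos: "b j > 0" for j unfolding b_def using apos assms(8) l1 by (simp add: add_pos_pos)
  define Pf where "Pf = S.P ((real n - 2 * real k) / real k)"
  have P0: "S.P (b 0)"
  proof -
    obtain C where C: "C > 0"
      "eventually (\<lambda>x. norm (u x) \<le> C * norm (x powr (- (2 * real k / (p - real k)) - \<epsilon>))) at_top"
      using assms(10) by (elim landau_o.bigE)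
    then obtain N where N: "\<And>x. x \<ge> N \<Longrightarrow> norm (u x) \<le> C * norm (x powr (- (2 * real k / (p - real k)) - \<epsilon>))"
      unfolding eventually_at_top_linorder by blast
    have "u r \<le> C * r powr (- b 0)" if "r \<ge> max N 1" for r
    proof -
      have "u r \<le> norm (u r)" by simp
      also have "\<dots> \<le> C * norm (r powr (- (2 * real k / (p - real k)) - \<epsilon>))" using N that by simp
      also have "norm (r powr (- (2 * real k / (p - real k)) - \<epsilon>)) = r powr (- b 0)"
        unfolding b_def a_def by simp
      finally show ?thesis .
    qed
    hence "max N 1 \<ge> 1 \<and> C > 0 \<and> (\<forall>r\<ge>max N 1. u r \<le> C * r powr (- b 0))" using C by simp
    thus ?thesis unfolding S.P_def by (rule exI[of _ C, OF exI[of _ "max N 1"]])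
  qed
  have fin: "S.P (b j) \<Longrightarrow> p * b j > real n \<Longrightarrow> Pf" for j
    unfolding Pf_def by (rule S.final_step[OF _ bpos]) (use assms(4) in auto)
  have claim: "S.P (b j) \<or> Pf" for j
  proof (induction j)
    case 0 thus ?case using P0 by simp
  next
    case (Suc j)
    show ?case
    proof (cases "Pf")
      case False
      hence Pj: "S.P (b j)" using Suc by simp
      show ?thesis
      proof (cases "p * b j > real n")
        case True thus ?thesis using fin Pj by blast
      next
        case False
        have "S.P (a + l * (\<epsilon> * l ^ j))"
          by (rule S.iter_step[OF Pj _ apos aeq _ _ kl]) 
             (use False assms(4,8) l1 in \<open>auto simp: b_def\<close>)
        thus ?thesis unfolding b_def by (simp add: algebra_simps)
      qed
    qed simp
  qed
  obtain j where j: "(real n / p - a) / \<epsilon> < l ^ j" using real_arch_pow[OF l1] by blast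
  have "real n / p - a < \<epsilon> * l ^ j" using j assms(8) by (simp add: pos_divide_less_eq mult.commute)
  hence "real n / p < b j" unfolding b_def by simp
  hence "p * b j > real n" using pk kpos by (simp add: pos_divide_less_eq mult.commute)
  hence Pf using claim[of j] fin by blast
  then obtain M R where MR: "R \<ge> 1" "M > 0" "\<And>r. r \<ge> R \<Longrightarrow> u r \<le> M * r powr (- ((real n - 2 * real k) / real k))"
    unfolding Pf_def S.P_def by blast
  show ?thesis
  proof (rule bigoI[where c = M])
    show "eventually (\<lambda>x. norm (u x) \<le> M * norm (x powr ((2 * real k - real n) / real k))) at_top"
      unfolding eventually_at_top_linorder
    proof (rule exI[of _ R], intro allI impI)
      fix x assume x: "x \<ge> R"
      have "- ((real n - 2 * real k) / real k) = (2 * real k - real n) / real k"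
        by (simp add: minus_divide_left)
      hence "u x \<le> M * x powr ((2 * real k - real n) / real k)" using MR(3)[OF x] by simp
      moreover have "u x > 0" using S.upos x MR(1) by simp
      ultimately show "norm (u x) \<le> M * norm (x powr ((2 * real k - real n) / real k))" by simp
    qed
  qed
qed

end
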